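(* Let $\delta=(\mathbf a_1,\mathbf a_2,\mathbf a_3)$ be a nondegenerate, positively oriented m-triangle in the $xy$-plane with normal $\mathbf a_1\times\mathbf a_2/|\mathbf a_1\times\mathbf a_2|=\mathbf k$, whose shape $\delta^\ast$ is not the north pole. Let $\{\mathbf u_1,\mathbf u_2\}$ be an eigenframe of the inertia tensor $B_\delta$ in the plane, with $\mathbf u_1$ the eigenvector for the smallest eigenvalue $\lambda_1$, and let $\psi_i$ be the oriented angle from $\mathbf a_1$ to $\mathbf u_i$. Then $$\tan\frac\theta2=-\frac{1+\sin\varphi}{\cos\varphi}\tan\psi_1=\frac{1+\sin\varphi}{\cos\varphi}\cot\psi_2,$$ where $(\varphi,\theta)$ are the spherical coordinates of $\delta^\ast$ on the shape sphere: $\varphi$ the colatitude and $\theta$ the longitude (eastward, with $\theta=0$ at the binary collision shape $\mathfrak b_{23}$).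
   Context: Masses $m_1,m_2,m_3>0$, $m_1+m_2+m_3=1$; m-triangle $(\mathbf a_1,\mathbf a_2,\mathbf a_3)$ with $\sum m_i\mathbf a_i=0$. Inertia tensor $B_\delta(\mathbf u,\mathbf v)=\sum m_j(\mathbf u\times\mathbf a_j)\cdot(\mathbf v\times\mathbf a_j)$. The shape sphere $M^\ast$ (oriented m-triangles with $\sum m_i|\mathbf a_i|^2=1$ modulo rotation, with the kinematic metric $\frac14(d\varphi^2+\sin^2\varphi\,d\theta^2)$) has its equator consisting of collinear shapes and its north pole equal to the shape of the positively oriented m-triangle with $m_j|\mathbf a_j|^2=(1-m_j)/2$; the northern hemisphere consists of positively oriented shapes. $\mathfrak b_{ij}$ is the binary collision shape $\mathbf a_i=\mathbf a_j$ on the equator. The eastward direction of increasing longitude is the positive direction of the equator induced by the orientation of the northern hemisphere, in which $\mathfrak b_{23},\mathfrak b_{31},\mathfrak b_{12}$ appear in positive cyclic order. *)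

theory Defs
  imports "HOL-Analysis.Analysis"
begin

definition kvec :: "real^3" where "kvec = vector [0, 0, 1]"

definition inertia :: "real \<Rightarrow> real \<Rightarrow> real \<Rightarrow> real^3 \<Rightarrow> real^3 \<Rightarrow> real^3
    \<Rightarrow> real^3 \<Rightarrow> real^3 \<Rightarrow> real" where
  "inertia m1 m2 m3 a1 a2 a3 u v =
     m1 * ((cross3 u a1) \<bullet> (cross3 v a1)) + m2 * ((cross3 u a2) \<bullet> (cross3 v a2))
   + m3 * ((cross3 u a3) \<bullet> (cross3 v a3))"

definition moment :: "real \<Rightarrow> real \<Rightarrow> real \<Rightarrow> real^3 \<Rightarrow> real^3 \<Rightarrow> real^3 \<Rightarrow> real" where
  "moment m1 m2 m3 a1 a2 a3 = m1 * (norm a1)^2 + m2 * (norm a2)^2 + m3 * (norm a3)^2"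

definition cplx :: "real^3 \<Rightarrow> complex" where
  "cplx a = Complex (a $ 1) (a $ 2)"

definition jac1 :: "real \<Rightarrow> real \<Rightarrow> real \<Rightarrow> real^3 \<Rightarrow> real^3 \<Rightarrow> real^3 \<Rightarrow> complex" where
  "jac1 m1 m2 m3 a1 a2 a3 = complex_of_real (sqrt (m2 * m3 / (1 - m1))) * (cplx a2 - cplx a3)"

definition jac2 :: "real \<Rightarrow> real \<Rightarrow> real \<Rightarrow> real^3 \<Rightarrow> real^3 \<Rightarrow> real^3 \<Rightarrow> complex" where
  "jac2 m1 m2 m3 a1 a2 a3 = complex_of_real (sqrt (m1 / (1 - m1))) * cplx a1"

text \<open>The shape of a planar m-triangle as a point of the unit sphere in R^3 (Hopf map
  in Jacobi coordinates).  Third axis: north pole (positively oriented shape with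
  m_j |a_j|^2 = (1 - m_j)/2 after normalisation); equator: collinear shapes;
  first axis: binary collision b23 (longitude 0); longitude increasing so that
  b23, b31, b12 are in positive cyclic order.\<close>
definition shape_point :: "real \<Rightarrow> real \<Rightarrow> real \<Rightarrow> real^3 \<Rightarrow> real^3 \<Rightarrow> real^3 \<Rightarrow> real^3" where
  "shape_point m1 m2 m3 a1 a2 a3 =
     (let w1 = jac1 m1 m2 m3 a1 a2 a3; w2 = jac2 m1 m2 m3 a1 a2 a3;
          I = moment m1 m2 m3 a1 a2 a3
      in vector [((cmod w2)^2 - (cmod w1)^2) / I,
                 - 2 * Re (w1 * cnj w2) / I,
                 2 * Im (w1 * cnj w2) / I])"

definition shape_coords :: "real \<Rightarrow> real \<Rightarrow> real \<Rightarrow> real^3 \<Rightarrow> real^3 \<Rightarrow> real^3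
    \<Rightarrow> real \<Rightarrow> real \<Rightarrow> bool" where
  "shape_coords m1 m2 m3 a1 a2 a3 \<phi> \<theta> \<longleftrightarrow>
     0 \<le> \<phi> \<and> \<phi> \<le> pi \<and>
     shape_point m1 m2 m3 a1 a2 a3 = vector [sin \<phi> * cos \<theta>, sin \<phi> * sin \<theta>, cos \<phi>]"

definition inertia_eigen :: "real \<Rightarrow> real \<Rightarrow> real \<Rightarrow> real^3 \<Rightarrow> real^3 \<Rightarrow> real^3
    \<Rightarrow> real \<Rightarrow> real^3 \<Rightarrow> bool" where
  "inertia_eigen m1 m2 m3 a1 a2 a3 lam u \<longleftrightarrow>
     u \<noteq> 0 \<and> (\<forall>v. inertia m1 m2 m3 a1 a2 a3 u v = lam * (u \<bullet> v))"

definition oriented_angle :: "real^3 \<Rightarrow> real^3 \<Rightarrow> real^3 \<Rightarrow> real \<Rightarrow> bool" where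
  "oriented_angle n a u \<psi> \<longleftrightarrow>
     cos \<psi> = (a \<bullet> u) / (norm a * norm u) \<and>
     sin \<psi> = ((cross3 a u) \<bullet> n) / (norm a * norm u)"

end

theory Submission
  imports Defs
begin

lemma inertia_planar:
  assumes "a1$3 = 0" "a2$3 = 0" "a3$3 = 0" "u$3 = 0"
  shows "inertia m1 m2 m3 a1 a2 a3 u v =
     m1*(u$1* a1$2 - u$2* a1$1)*(v$1* a1$2 - v$2* a1$1)
   + m2*(u$1* a2$2 - u$2* a2$1)*(v$1* a2$2 - v$2* a2$1)
   + m3*(u$1* a3$2 - u$2* a3$1)*(v$1* a3$2 - v$2* a3$1)"
  using assms by (simp add: inertia_def inner_vec_def sum_3 cross_components algebra_simps)

lemma eigen_planar:
  fixes x1 y1 x2 y2 x3 y3 U V lam :: real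
  assumes a: "a1$1 = x1" "a1$2 = y1" "a1$3 = 0" "a2$1 = x2" "a2$2 = y2" "a2$3 = 0"
     "a3$1 = x3" "a3$2 = y3" "a3$3 = 0" and u: "u$1 = U" "u$2 = V" "u$3 = 0"
    and e: "inertia_eigen m1 m2 m3 a1 a2 a3 lam u"
  shows "(m1*(x1^2-y1^2)+m2*(x2^2-y2^2)+m3*(x3^2-y3^2))*U + 2*(m1* x1* y1+m2* x2* y2+m3* x3* y3)*V
          = (m1*(x1^2+y1^2)+m2*(x2^2+y2^2)+m3*(x3^2+y3^2) - 2* lam)*U"
    and "2*(m1* x1* y1+m2* x2* y2+m3* x3* y3)*U - (m1*(x1^2-y1^2)+m2*(x2^2-y2^2)+m3*(x3^2-y3^2))*V
          = (m1*(x1^2+y1^2)+m2*(x2^2+y2^2)+m3*(x3^2+y3^2) - 2* lam)*V"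
proof -
  have E: "\<And>v. inertia m1 m2 m3 a1 a2 a3 u v = lam * (u \<bullet> v)" using e unfolding inertia_eigen_def by blast
  have i1: "m1*(U* y1 - V* x1)* y1 + m2*(U* y2 - V* x2)* y2 + m3*(U* y3 - V* x3)* y3 = lam*U"
    using E[of "axis 1 1"] inertia_planar[of a1 a2 a3 u m1 m2 m3 "axis 1 1"] a u
      cart_eq_inner_axis[of u 1]
    by (simp add: axis_def)
  have i2: "-(m1*(U* y1 - V* x1)* x1 + m2*(U* y2 - V* x2)* x2 + m3*(U* y3 - V* x3)* x3) = lam*V"
    using E[of "axis 2 1"] inertia_planar[of a1 a2 a3 u m1 m2 m3 "axis 2 1"] a u
      cart_eq_inner_axis[of u 2]
    by (simp add: axis_def algebra_simps)
  show "(m1*(x1^2-y1^2)+m2*(x2^2-y2^2)+m3*(x3^2-y3^2))*U + 2*(m1* x1* y1+m2* x2* y2+m3* x3* y3)*V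
          = (m1*(x1^2+y1^2)+m2*(x2^2+y2^2)+m3*(x3^2+y3^2) - 2* lam)*U"
    using i1 by (simp add: power2_eq_square algebra_simps)
  show "2*(m1* x1* y1+m2* x2* y2+m3* x3* y3)*U - (m1*(x1^2-y1^2)+m2*(x2^2-y2^2)+m3*(x3^2-y3^2))*V
          = (m1*(x1^2+y1^2)+m2*(x2^2+y2^2)+m3*(x3^2+y3^2) - 2* lam)*V"
    using i2 by (simp add: power2_eq_square algebra_simps)
qed

lemma shape_planar:
  assumes "a1$1 = x1" "a1$2 = y1" "a2$1 = x2" "a2$2 = y2" "a3$1 = x3" "a3$2 = y3"
    and "P1 = sqrt (m2 * m3 / (1 - m1)) * (x2 - x3)" "Q1 = sqrt (m2 * m3 / (1 - m1)) * (y2 - y3)"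
    and "P2 = sqrt (m1 / (1 - m1)) * x1" "Q2 = sqrt (m1 / (1 - m1)) * y1"
    and "I = moment m1 m2 m3 a1 a2 a3"
  shows "shape_point m1 m2 m3 a1 a2 a3 = vector [(P2^2+Q2^2 - (P1^2+Q1^2))/I,
          -2*(P1*P2+Q1*Q2)/I, 2*(Q1*P2-P1*Q2)/I]"
proof -
  have j1: "jac1 m1 m2 m3 a1 a2 a3 = Complex P1 Q1" using assms
    by (simp add: jac1_def cplx_def complex_eq_iff algebra_simps)
  have j2: "jac2 m1 m2 m3 a1 a2 a3 = Complex P2 Q2" using assms
    by (simp add: jac2_def cplx_def complex_eq_iff algebra_simps)
  show ?thesis unfolding shape_point_def Let_def j1 j2 assms(11)[symmetric]
    by (simp add: cmod_power2)
qed

lemma final_lemma: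
  fixes p q N D c s sf cf C S :: real
  assumes N: "N > 0" and q: "q > 0" and D: "D = 1+p^2+q^2" and sf: "sf \<ge> 0" "sf^2+cf^2 = 1"
    and e1: "sf*C*D = 1-p^2-q^2" and e2: "sf*S*D = -2* p" and e3: "cf*D = 2* q"
    and cs: "c^2+s^2 = 1" and f1: "1+p^2-q^2 = N*(c^2-s^2)" and f2: "p* q = N* c* s"
  shows "S/(C+1) = -((1+sf)/cf) * (s/c)"
proof -
  have Dp: "D > 0" using D by (simp add: add_pos_nonneg)
  have N2: "N^2 = (1+p^2-q^2)^2 + 4* p^2* q^2"
  proof -
    have "(1+p^2-q^2)^2 + 4*(p* q)^2 = (N*(c^2-s^2))^2 + 4*(N* c* s)^2" by (simp only: f1 f2)
    hence "(1+p^2-q^2)^2 + 4* p^2* q^2 = N^2*((c^2-s^2)^2 + 4* c^2* s^2)"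
      by (simp add: power2_eq_square algebra_simps)
    also have "(c^2-s^2)^2 + 4* c^2* s^2 = (c^2+s^2)^2" by (simp add: power2_eq_square algebra_simps)
    finally show ?thesis using cs by simp
  qed
  have "(sf*D)^2 = N^2"
  proof -
    have "(sf*D)^2 = D^2*(sf^2+cf^2) - (cf*D)^2" by (simp add: power2_eq_square algebra_simps)
    also have "\<dots> = D^2 - (cf*D)^2" using sf(2) by simp
    also have "\<dots> = D^2 - (2* q)^2" by (simp only: e3)
    also have "\<dots> = N^2" unfolding N2 D by (simp add: power2_eq_square algebra_simps)
    finally show ?thesis .
  qed
  hence sfD: "sf*D = N" using sf(1) Dp N
    using power2_eq_iff_nonneg[of "sf*D" N] by simp
  have "C*(sf*D) = 1-p^2-q^2" using e1 by (simp add: ac_simps)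
  hence C: "C = (1-p^2-q^2)/N" using sfD N by (simp add: field_simps)
  have "S*N = -2* p"
  proof -
    have "S*N = S*(sf*D)" by (simp add: sfD)
    also have "\<dots> = sf*S*D" by (simp add: ac_simps)
    finally show ?thesis using e2 by simp
  qed
  hence S: "S = -2* p/N" using sfD N by (simp add: field_simps)
  have cfv: "cf = 2* q/D" using e3 Dp by (simp add: field_simps)
  have sfv: "sf = N/D" using sfD Dp by (simp add: field_simps)
  show ?thesis
  proof (cases "c = 0")
    case True
    then have "s^2 = 1" using cs by simp
    then have "N = q^2-1-p^2" using f1 True by simp
    moreover have "p = 0" using f2 True q by simp
    ultimately have "(C + 1)*N = 0" using C N by (simp add: field_simps)
    hence "C + 1 = 0" using N by simp
    then show ?thesis using True by simp
  next
    case False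
    show ?thesis
    proof (cases "C + 1 = 0")
      case True
      then have "N = p^2+q^2-1" using C N by (simp add: field_simps)
      then have "(p^2+q^2-1)^2 = (1+p^2-q^2)^2 + 4* p^2* q^2" using N2 by simp
      then have "p^2 = 0" by (simp add: power2_eq_square algebra_simps)
      then have "p = 0" by simp
      then have "s = 0" using f2 False N by simp
      then show ?thesis using True by simp
    next
      case C1: False
      have s2: "s^2 = 1 - c^2" using cs by simp
      have c2: "N + 1 + p^2 - q^2 = 2* c^2*N" using f1 unfolding s2 by (simp add: algebra_simps)
      have nz: "N + 1 + p^2 - q^2 \<noteq> 0" using c2 False N by simp
      have sc: "s/c = 2* p* q/(N+1+p^2-q^2)" using c2 f2 False N by (simp add: field_simps power2_eq_square)
      have nz2: "N + 1 - p^2 - q^2 \<noteq> 0" using C1 C N by (simp add: field_simps)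
      have "C + 1 = (N+1-p^2-q^2)/N" unfolding C using N by (simp add: field_simps)
      hence L: "S/(C+1) = -2* p/(N+1-p^2-q^2)" unfolding S using N nz2 by simp
      have r1: "-((1+sf)/cf) * (s/c) = -((1 + N/D)/(2* q/D)) * (2* p* q/(N+1+p^2-q^2))"
        by (simp only: sfv cfv sc)
      have r2: "(1 + N/D)/(2* q/D) = (D+N)/(2* q)" using Dp q by (simp add: field_simps)
      have r3: "(D+N)/(2* q) * (2* p* q/(N+1+p^2-q^2)) = (D+N)* p/(N+1+p^2-q^2)"
        using q nz by (simp add: divide_simps)
      have R: "-((1+sf)/cf) * (s/c) = -((D+N)* p/(N+1+p^2-q^2))" unfolding r1 r2
        using r3 by simp
      have key: "(D+N)*(N+1-p^2-q^2) = 2*(N+1+p^2-q^2)" using N2 D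
        by (simp add: power2_eq_square algebra_simps)
      have gen: "-2* p/Y = -((D+N)* p/X)" if hX: "X \<noteq> 0" and hY: "Y \<noteq> 0" and hk: "(D+N)*Y = 2*X" for X Y
      proof -
        have "(D+N)* p/X = ((D+N)*Y)* p/(X*Y)" using hY by simp
        also have "\<dots> = (2* p)*X/(Y*X)" unfolding hk by (simp add: ac_simps)
        also have "\<dots> = 2* p/Y" using hX by simp
        finally show ?thesis by simp
      qed
      show ?thesis unfolding L R using gen[OF nz nz2 key] .
    qed
  qed
qed
lemma jac_bilin:
  fixes m1 m2 m3 x1 x2 x3 y1 y2 y3 :: real
  assumes "m1 > 0" "m2 > 0" "m3 > 0" "m1+m2+m3 = 1"
    and hx: "m1* x1+m2* x2+m3* x3 = 0" and hy: "m1* y1+m2* y2+m3* y3 = 0"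
  shows "m1* x1* y1+m2* x2* y2+m3* x3* y3 = m2* m3/(1-m1)*(x2-x3)*(y2-y3) + m1/(1-m1)* x1* y1"
proof -
  have m: "1 - m1 = m2 + m3" using assms by simp
  have pos: "m2 + m3 > 0" using assms by simp
  have x1: "m1* x1 = -(m2* x2+m3* x3)" using hx by simp
  have y1: "m1* y1 = -(m2* y2+m3* y3)" using hy by simp
  have F: "(m2+m3)*(m1* x1* y1+m2* x2* y2+m3* x3* y3) = m2* m3*(x2-x3)*(y2-y3) + m1* x1* y1"
  proof -
    have "(m2+m3)*(m1* x1* y1) = (1-m1)*(m1* x1* y1)" using m by simp
    also have "\<dots> = m1* x1* y1 - (m1* x1)*(m1* y1)" by (simp add: algebra_simps)
    also have "\<dots> = m1* x1* y1 - (m2* x2+m3* x3)*(m2* y2+m3* y3)" unfolding x1 y1 by (simp add: algebra_simps)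
    finally show ?thesis by (simp add: algebra_simps)
  qed
  have "m1* x1* y1+m2* x2* y2+m3* x3* y3 = ((m2+m3)*(m1* x1* y1+m2* x2* y2+m3* x3* y3))/(m2+m3)"
    using pos by simp
  also have "\<dots> = (m2* m3*(x2-x3)*(y2-y3) + m1* x1* y1)/(m2+m3)" unfolding F ..
  also have "\<dots> = m2* m3/(m2+m3)*(x2-x3)*(y2-y3) + m1/(m2+m3)* x1* y1"
    by (simp add: add_divide_distrib)
  finally show ?thesis unfolding m .
qed

lemma north_lemma:
  fixes m1 m2 m3 x1 x2 x3 y1 y2 y3 :: real
  assumes ms: "m1 > 0" "m2 > 0" "m3 > 0" "m1+m2+m3 = 1"
    and hx: "m1* x1+m2* x2+m3* x3 = 0" and hy: "m1* y1+m2* y2+m3* y3 = 0"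
    and qr: "m1*(x1^2-y1^2)+m2*(x2^2-y2^2)+m3*(x3^2-y3^2) = 0"
    and qi: "m1* x1* y1+m2* x2* y2+m3* x3* y3 = 0"
  shows "m1*(x1^2+y1^2) = (1-m1)/2 * (m1*(x1^2+y1^2)+m2*(x2^2+y2^2)+m3*(x3^2+y3^2))"
proof -
  define k where "k = m2* m3/(1-m1)"
  define g where "g = m1/(1-m1)"
  define X where "X = x2-x3"
  define Y where "Y = y2-y3"
  have m1: "1 - m1 > 0" using ms by simp
  have k0: "k \<ge> 0" and g0: "g > 0" unfolding k_def g_def using ms m1 by auto
  have bxx: "m1* x1* x1+m2* x2* x2+m3* x3* x3 = k*X*X + g* x1* x1" unfolding k_def g_def X_def
    using jac_bilin[OF ms hx hx] .
  have byy: "m1* y1* y1+m2* y2* y2+m3* y3* y3 = k*Y*Y + g* y1* y1" unfolding k_def g_def Y_def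
    using jac_bilin[OF ms hy hy] .
  have bxy: "m1* x1* y1+m2* x2* y2+m3* x3* y3 = k*X*Y + g* x1* y1" unfolding k_def g_def X_def Y_def
    using jac_bilin[OF ms hx hy] .
  have e1: "k*(X^2-Y^2) = -(g*(x1^2-y1^2))"
  proof -
    have "m1*(x1^2-y1^2)+m2*(x2^2-y2^2)+m3*(x3^2-y3^2)
      = (m1* x1* x1+m2* x2* x2+m3* x3* x3) - (m1* y1* y1+m2* y2* y2+m3* y3* y3)"
      by (simp add: power2_eq_square algebra_simps)
    thus ?thesis using qr unfolding bxx byy by (simp add: power2_eq_square algebra_simps)
  qed
  have e2: "k*X*Y = -(g* x1* y1)" using qi bxy by simp
  have "(k*(X^2+Y^2))^2 = (g*(x1^2+y1^2))^2"
  proof -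
    have "(k*(X^2+Y^2))^2 = (k*(X^2-Y^2))^2 + 4*(k*X*Y)^2" by (simp add: power2_eq_square algebra_simps)
    also have "\<dots> = (g*(x1^2-y1^2))^2 + 4*(g* x1* y1)^2" unfolding e1 e2 by simp
    also have "\<dots> = (g*(x1^2+y1^2))^2" by (simp add: power2_eq_square algebra_simps)
    finally show ?thesis .
  qed
  hence A: "k*(X^2+Y^2) = g*(x1^2+y1^2)"
    using power2_eq_iff_nonneg[of "k*(X^2+Y^2)" "g*(x1^2+y1^2)"] k0 g0 by simp
  have "m1*(x1^2+y1^2)+m2*(x2^2+y2^2)+m3*(x3^2+y3^2)
      = (m1* x1* x1+m2* x2* x2+m3* x3* x3) + (m1* y1* y1+m2* y2* y2+m3* y3* y3)"
    by (simp add: power2_eq_square algebra_simps)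
  also have "\<dots> = k*(X^2+Y^2) + g*(x1^2+y1^2)" unfolding bxx byy by (simp add: power2_eq_square algebra_simps)
  also have "\<dots> = 2* g*(x1^2+y1^2)" unfolding A by simp
  finally have I: "m1*(x1^2+y1^2)+m2*(x2^2+y2^2)+m3*(x3^2+y3^2) = 2* g*(x1^2+y1^2)" .
  show ?thesis unfolding I g_def using m1 by (simp add: field_simps)
qed

theorem mainTheorem9:
  fixes m1 m2 m3 :: real and a1 a2 a3 u1 u2 :: "real^3"
    and lam1 lam2 \<psi>1 \<psi>2 \<phi> \<theta> :: real
  assumes masses: "m1 > 0" "m2 > 0" "m3 > 0" "m1 + m2 + m3 = 1"
    and mtri: "m1 *\<^sub>R a1 + m2 *\<^sub>R a2 + m3 *\<^sub>R a3 = 0"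
    and plane: "a1 $ 3 = 0" "a2 $ 3 = 0" "a3 $ 3 = 0"
    and nondeg: "cross3 a1 a2 \<noteq> 0"
    and posor: "(1 / norm (cross3 a1 a2)) *\<^sub>R (cross3 a1 a2) = kvec"
    and not_north: "\<not> (m1 * (norm a1)^2 = (1 - m1) / 2 * moment m1 m2 m3 a1 a2 a3 \<and>
                        m2 * (norm a2)^2 = (1 - m2) / 2 * moment m1 m2 m3 a1 a2 a3 \<and>
                        m3 * (norm a3)^2 = (1 - m3) / 2 * moment m1 m2 m3 a1 a2 a3)"
    and frame: "u1 $ 3 = 0" "u2 $ 3 = 0" "norm u1 = 1" "norm u2 = 1" "u1 \<bullet> u2 = 0"
    and eig1: "inertia_eigen m1 m2 m3 a1 a2 a3 lam1 u1"
    and eig2: "inertia_eigen m1 m2 m3 a1 a2 a3 lam2 u2"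
    and smallest: "\<And>lam v. inertia_eigen m1 m2 m3 a1 a2 a3 lam v \<Longrightarrow> lam1 \<le> lam"
    and ang1: "oriented_angle kvec a1 u1 \<psi>1"
    and ang2: "oriented_angle kvec a1 u2 \<psi>2"
    and coords: "shape_coords m1 m2 m3 a1 a2 a3 \<phi> \<theta>"
  shows "tan (\<theta> / 2) = - ((1 + sin \<phi>) / cos \<phi>) * tan \<psi>1 \<and>
         tan (\<theta> / 2) = ((1 + sin \<phi>) / cos \<phi>) * cot \<psi>2"
proof -
  define x1 where "x1 = a1$1"
  define y1 where "y1 = a1$2"
  define x2 where "x2 = a2$1"
  define y2 where "y2 = a2$2"
  define x3 where "x3 = a3$1"
  define y3 where "y3 = a3$2"
  define U1 where "U1 = u1$1"
  define V1 where "V1 = u1$2"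
  define U2 where "U2 = u2$1"
  define V2 where "V2 = u2$2"
  note ms = masses
  have hx: "m1* x1+m2* x2+m3* x3 = 0"
  proof -
    have "(m1 *\<^sub>R a1 + m2 *\<^sub>R a2 + m3 *\<^sub>R a3)$1 = 0" using mtri by simp
    thus ?thesis unfolding x1_def x2_def x3_def by simp
  qed
  have hy: "m1* y1+m2* y2+m3* y3 = 0"
  proof -
    have "(m1 *\<^sub>R a1 + m2 *\<^sub>R a2 + m3 *\<^sub>R a3)$2 = 0" using mtri by simp
    thus ?thesis unfolding y1_def y2_def y3_def by simp
  qed
  have nsq: "(norm a)^2 = (a$1)^2 + (a$2)^2" if "a$3 = 0" for a :: "real^3"
    using that unfolding power2_norm_eq_inner by (simp add: inner_vec_def sum_3 power2_eq_square)
  have n1: "(norm a1)^2 = x1^2+y1^2" using nsq[OF plane(1)] unfolding x1_def y1_def .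
  have n2: "(norm a2)^2 = x2^2+y2^2" using nsq[OF plane(2)] unfolding x2_def y2_def .
  have n3: "(norm a3)^2 = x3^2+y3^2" using nsq[OF plane(3)] unfolding x3_def y3_def .
  define I where "I = moment m1 m2 m3 a1 a2 a3"
  have Iexp: "I = m1*(x1^2+y1^2)+m2*(x2^2+y2^2)+m3*(x3^2+y3^2)"
    unfolding I_def moment_def n1 n2 n3 ..
  define Qr where "Qr = m1*(x1^2-y1^2)+m2*(x2^2-y2^2)+m3*(x3^2-y3^2)"
  define Qi where "Qi = 2*(m1* x1* y1+m2* x2* y2+m3* x3* y3)"
  have cr3: "(cross3 a1 a2)$3 = x1* y2 - y1* x2" by (simp add: cross_components x1_def x2_def y1_def y2_def)
  have kv3: "kvec$3 = 1" by (simp add: kvec_def)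
  have h3: "(1 / norm (cross3 a1 a2)) * (cross3 a1 a2)$3 = kvec$3"
    using arg_cong[OF posor, of "\<lambda>v. v$3"] by (simp only: vector_scaleR_component real_scaleR_def)
  have nc: "norm (cross3 a1 a2) > 0" using nondeg by simp
  have "(cross3 a1 a2)$3 = norm (cross3 a1 a2)" using h3 kv3 nc by (simp add: field_simps)
  hence orient: "x1* y2 - y1* x2 > 0" using cr3 nc by simp
  define k where "k = m2* m3/(1-m1)"
  define g where "g = m1/(1-m1)"
  have m1': "1 - m1 > 0" using ms by simp
  have kpos: "k > 0" unfolding k_def using ms m1' by simp
  have gpos: "g > 0" unfolding g_def using ms m1' by simp
  define al where "al = sqrt k"
  define ga where "ga = sqrt g"
  have al2: "al^2 = k" unfolding al_def using kpos by simp
  have ga2: "ga^2 = g" unfolding ga_def using gpos by simp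
  have alpos: "al > 0" unfolding al_def using kpos by simp
  have gapos: "ga > 0" unfolding ga_def using gpos by simp
  define P1 where "P1 = al*(x2-x3)"
  define Q1 where "Q1 = al*(y2-y3)"
  define P2 where "P2 = ga* x1"
  define Q2 where "Q2 = ga* y1"
  have bxx: "m1* x1* x1+m2* x2* x2+m3* x3* x3 = k*(x2-x3)*(x2-x3) + g* x1* x1"
    unfolding k_def g_def using jac_bilin[OF ms hx hx] .
  have byy: "m1* y1* y1+m2* y2* y2+m3* y3* y3 = k*(y2-y3)*(y2-y3) + g* y1* y1"
    unfolding k_def g_def using jac_bilin[OF ms hy hy] .
  have bxy: "m1* x1* y1+m2* x2* y2+m3* x3* y3 = k*(x2-x3)*(y2-y3) + g* x1* y1"
    unfolding k_def g_def using jac_bilin[OF ms hx hy] .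
  have P1s: "P1*P1 = k*(x2-x3)*(x2-x3)" unfolding P1_def al2[symmetric] by (simp add: power2_eq_square)
  have Q1s: "Q1*Q1 = k*(y2-y3)*(y2-y3)" unfolding Q1_def al2[symmetric] by (simp add: power2_eq_square)
  have PQ1: "P1*Q1 = k*(x2-x3)*(y2-y3)" unfolding P1_def Q1_def al2[symmetric] by (simp add: power2_eq_square)
  have P2s: "P2*P2 = g* x1* x1" unfolding P2_def ga2[symmetric] by (simp add: power2_eq_square)
  have Q2s: "Q2*Q2 = g* y1* y1" unfolding Q2_def ga2[symmetric] by (simp add: power2_eq_square)
  have PQ2: "P2*Q2 = g* x1* y1" unfolding P2_def Q2_def ga2[symmetric] by (simp add: power2_eq_square)
  have I_P: "I = P1^2+Q1^2+P2^2+Q2^2"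
  proof -
    have "I = (m1* x1* x1+m2* x2* x2+m3* x3* x3) + (m1* y1* y1+m2* y2* y2+m3* y3* y3)"
      unfolding Iexp by (simp add: power2_eq_square algebra_simps)
    also have "\<dots> = P1*P1+Q1*Q1+P2*P2+Q2*Q2" unfolding bxx byy P1s Q1s P2s Q2s by simp
    finally show ?thesis by (simp add: power2_eq_square)
  qed
  have Qr_P: "Qr = P1^2-Q1^2+P2^2-Q2^2"
  proof -
    have "Qr = (m1* x1* x1+m2* x2* x2+m3* x3* x3) - (m1* y1* y1+m2* y2* y2+m3* y3* y3)"
      unfolding Qr_def by (simp add: power2_eq_square algebra_simps)
    also have "\<dots> = P1*P1-Q1*Q1+P2*P2-Q2*Q2" unfolding bxx byy P1s Q1s P2s Q2s by simp
    finally show ?thesis by (simp add: power2_eq_square)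
  qed
  have Qi_P: "Qi = 2*(P1*Q1+P2*Q2)" unfolding Qi_def bxy PQ1 PQ2 by simp
  define W where "W = P2^2+Q2^2"
  have W_g: "W = g*(x1^2+y1^2)" unfolding W_def using P2s Q2s by (simp add: power2_eq_square algebra_simps)
  have xy1: "x1^2+y1^2 > 0"
  proof -
    have "x1 \<noteq> 0 \<or> y1 \<noteq> 0" using orient by auto
    thus ?thesis by (auto simp add: add_pos_nonneg add_nonneg_pos)
  qed
  have Wpos: "W > 0" unfolding W_g using gpos xy1 by simp
  define R1 where "R1 = P1*P2+Q1*Q2"
  define R2 where "R2 = Q1*P2-P1*Q2"
  have R2pos: "R2 > 0"
  proof -
    have R2e: "R2 = al* ga*((y2-y3)* x1 - (x2-x3)* y1)" unfolding R2_def P1_def Q1_def P2_def Q2_def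
      by (simp add: algebra_simps)
    have "m3*((y2-y3)* x1 - (x2-x3)* y1) = m3*(x1* y2-y1* x2) - (x1*(m3* y3) - y1*(m3* x3))"
      by (simp add: algebra_simps)
    also have "m3* y3 = -(m1* y1+m2* y2)" using hy by simp
    also have "m3* x3 = -(m1* x1+m2* x2)" using hx by simp
    finally have "m3*((y2-y3)* x1 - (x2-x3)* y1) = (m2+m3)*(x1* y2-y1* x2)" by (simp add: algebra_simps)
    moreover have "(m2+m3)*(x1* y2-y1* x2) > 0" using ms orient by simp
    ultimately have "m3*((y2-y3)* x1 - (x2-x3)* y1) > 0" by simp
    hence "(y2-y3)* x1 - (x2-x3)* y1 > 0" using ms by (simp add: zero_less_mult_iff)
    thus ?thesis unfolding R2e using alpos gapos by simp
  qed
  have lag: "(P1^2+Q1^2)*W = R1^2+R2^2" unfolding W_def R1_def R2_def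
    by (simp add: power2_eq_square algebra_simps)
  have sp: "shape_point m1 m2 m3 a1 a2 a3 = vector [(P2^2+Q2^2 - (P1^2+Q1^2))/I,
          -2*(P1*P2+Q1*Q2)/I, 2*(Q1*P2-P1*Q2)/I]"
    by (rule shape_planar) (simp_all only: x1_def y1_def x2_def y2_def x3_def y3_def P1_def Q1_def
        P2_def Q2_def al_def ga_def k_def g_def I_def)
  have cvec: "vector [sin \<phi> * cos \<theta>, sin \<phi> * sin \<theta>, cos \<phi>] = (vector [(W - (P1^2+Q1^2))/I,
          -2*R1/I, 2*R2/I] :: real^3)"
    using coords sp unfolding shape_coords_def W_def R1_def R2_def by simp
  have sc1: "sin \<phi> * cos \<theta> = (W - (P1^2+Q1^2))/I" using arg_cong[OF cvec, of "\<lambda>v. v$1"] by simp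
  have sc2: "sin \<phi> * sin \<theta> = -2*R1/I" using arg_cong[OF cvec, of "\<lambda>v. v$2"] by simp
  have sc3: "cos \<phi> = 2*R2/I" using arg_cong[OF cvec, of "\<lambda>v. v$3"] by simp
  have phi: "0 \<le> \<phi>" "\<phi> \<le> pi" using coords unfolding shape_coords_def by auto
  have Ipos: "I > 0" unfolding I_P using Wpos unfolding W_def
    by (smt (verit) zero_le_power2)
  define p where "p = R1/W"
  define q where "q = R2/W"
  define D where "D = 1+p^2+q^2"
  have DI: "D = I/W"
  proof -
    have "D*W^2 = W^2 + R1^2 + R2^2" unfolding D_def p_def q_def using Wpos
      by (simp add: field_simps power2_eq_square)
    also have "\<dots> = I*W" unfolding add.assoc lag[symmetric] unfolding I_P W_def by (simp add: power2_eq_square algebra_simps)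
    finally show ?thesis using Wpos by (simp add: field_simps power2_eq_square)
  qed
  have e1: "sin \<phi> * cos \<theta> * D = 1-p^2-q^2"
  proof -
    have "sin \<phi> * cos \<theta> * D = (W - (P1^2+Q1^2))/W" unfolding sc1 DI using Ipos Wpos by simp
    also have "\<dots> = (W^2 - (P1^2+Q1^2)*W)/W^2" using Wpos by (simp add: field_simps power2_eq_square)
    also have "\<dots> = 1-p^2-q^2" unfolding lag p_def q_def using Wpos by (simp add: field_simps power2_eq_square)
    finally show ?thesis .
  qed
  have e2: "sin \<phi> * sin \<theta> * D = -2* p" unfolding sc2 DI p_def using Ipos Wpos by simp
  have e3: "cos \<phi> * D = 2* q" unfolding sc3 DI q_def using Ipos Wpos by simp
  have qpos: "q > 0" unfolding q_def using R2pos Wpos by simp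
  have ev1: "Qr*U1 + Qi*V1 = (I - 2* lam1)*U1" "Qi*U1 - Qr*V1 = (I - 2* lam1)*V1"
    using eigen_planar[of a1 x1 y1 a2 x2 y2 a3 x3 y3 u1 U1 V1 m1 m2 m3 lam1] plane frame eig1
    unfolding Qr_def Qi_def Iexp by (simp_all add: x1_def y1_def x2_def y2_def x3_def y3_def U1_def V1_def)
  have ev2: "Qr*U2 + Qi*V2 = (I - 2* lam2)*U2" "Qi*U2 - Qr*V2 = (I - 2* lam2)*V2"
    using eigen_planar[of a1 x1 y1 a2 x2 y2 a3 x3 y3 u2 U2 V2 m1 m2 m3 lam2] plane frame eig2
    unfolding Qr_def Qi_def Iexp by (simp_all add: x1_def y1_def x2_def y2_def x3_def y3_def U2_def V2_def)
  define t1 where "t1 = I - 2* lam1"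
  define t2 where "t2 = I - 2* lam2"
  have uu1: "U1^2+V1^2 = 1" using nsq[OF frame(1)] frame(3) unfolding U1_def V1_def by simp
  have uu2: "U2^2+V2^2 = 1" using nsq[OF frame(2)] frame(4) unfolding U2_def V2_def by simp
  have u12: "U1*U2+V1*V2 = 0" using frame(5) frame(1,2) unfolding U1_def V1_def U2_def V2_def
    by (simp add: inner_vec_def sum_3)
  define e where "e = U1*V2 - V1*U2"
  have e2': "e^2 = 1"
  proof -
    have "e^2 = (U1^2+V1^2)*(U2^2+V2^2) - (U1*U2+V1*V2)^2" unfolding e_def
      by (simp add: power2_eq_square algebra_simps)
    thus ?thesis using uu1 uu2 u12 by simp
  qed
  have U2e: "U2 = -e*V1"
  proof -
    have "U2 = U2*(U1^2+V1^2)" using uu1 by simp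
    also have "\<dots> = U1*(U1*U2+V1*V2) - V1* e" unfolding e_def by (simp add: power2_eq_square algebra_simps)
    finally show ?thesis using u12 by simp
  qed
  have V2e: "V2 = e*U1"
  proof -
    have "V2 = V2*(U1^2+V1^2)" using uu1 by simp
    also have "\<dots> = V1*(U1*U2+V1*V2) + U1* e" unfolding e_def by (simp add: power2_eq_square algebra_simps)
    finally show ?thesis using u12 by simp
  qed
  have enz: "e \<noteq> 0" using e2' by auto
  have "(t1+t2)*V1 = 0"
  proof -
    have "e*(Qi*U1 - Qr*V1) = e*(-t2*V1)" using ev2(1) unfolding U2e V2e t2_def by (simp add: algebra_simps)
    hence "Qi*U1 - Qr*V1 = -t2*V1" using enz mult_left_cancel by blast
    thus ?thesis using ev1(2) unfolding t1_def by (simp add: algebra_simps)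
  qed
  moreover have "(t1+t2)*U1 = 0"
  proof -
    have "e*(-(Qr*U1 + Qi*V1)) = e*(t2*U1)" using ev2(2) unfolding U2e V2e t2_def by (simp add: algebra_simps)
    hence "-(Qr*U1 + Qi*V1) = t2*U1" using enz mult_left_cancel by blast
    thus ?thesis using ev1(1) unfolding t1_def by (simp add: algebra_simps)
  qed
  ultimately have t12: "t2 = -t1" using uu1
    by (metis add_eq_0_iff mult_eq_0_iff power2_eq_square zero_neq_one add.right_neutral)
  have "lam1 \<le> lam2" using smallest[OF eig2] .
  hence t1nn: "t1 \<ge> 0" using t12 unfolding t1_def t2_def by simp
  have QrE: "Qr = t1*(U1^2-V1^2)"
  proof -
    have "Qr = Qr*(U1^2+V1^2)" using uu1 by simp
    also have "\<dots> = U1*(Qr*U1 + Qi*V1) - V1*(Qi*U1 - Qr*V1)" by (simp add: power2_eq_square algebra_simps)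
    also have "\<dots> = t1*(U1^2-V1^2)" unfolding ev1 t1_def by (simp add: power2_eq_square algebra_simps)
    finally show ?thesis .
  qed
  have QiE: "Qi = 2* t1*U1*V1"
  proof -
    have "Qi = Qi*(U1^2+V1^2)" using uu1 by simp
    also have "\<dots> = V1*(Qr*U1 + Qi*V1) + U1*(Qi*U1 - Qr*V1)" by (simp add: power2_eq_square algebra_simps)
    also have "\<dots> = 2* t1*U1*V1" unfolding ev1 t1_def by (simp add: power2_eq_square algebra_simps)
    finally show ?thesis .
  qed
  have t1pos: "t1 > 0"
  proof (rule ccontr)
    assume "\<not> t1 > 0"
    hence "t1 = 0" using t1nn by simp
    hence qr0: "m1*(x1^2-y1^2)+m2*(x2^2-y2^2)+m3*(x3^2-y3^2) = 0"
      and qi0: "m1* x1* y1+m2* x2* y2+m3* x3* y3 = 0" using QrE QiE unfolding Qr_def Qi_def by simp_all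
    have N1: "m1*(x1^2+y1^2) = (1-m1)/2 * I"
      using north_lemma[OF ms hx hy qr0 qi0] unfolding Iexp .
    have ms2: "m2 > 0" "m3 > 0" "m1 > 0" "m2+m3+m1 = 1" using ms by auto
    have N2: "m2*(x2^2+y2^2) = (1-m2)/2 * I"
      using north_lemma[OF ms2, of x2 x3 x1 y2 y3 y1] hx hy qr0 qi0 unfolding Iexp
      by (simp add: ac_simps)
    have ms3: "m3 > 0" "m1 > 0" "m2 > 0" "m3+m1+m2 = 1" using ms by auto
    have N3: "m3*(x3^2+y3^2) = (1-m3)/2 * I"
      using north_lemma[OF ms3, of x3 x1 x2 y3 y1 y2] hx hy qr0 qi0 unfolding Iexp
      by (simp add: ac_simps)
    show False using not_north N1 N2 N3 unfolding n1 n2 n3 I_def by simp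
  qed
  define \<rho> where "\<rho> = norm a1"
  have rho2: "\<rho>^2 = x1^2+y1^2" unfolding \<rho>_def n1 ..
  have rhopos: "\<rho> > 0" using rho2 xy1 unfolding \<rho>_def by (metis norm_ge_zero order_less_le power2_eq_square mult_zero_left)
  have dot1: "a1 \<bullet> u1 = x1*U1+y1*V1" using plane(1) frame(1)
    unfolding x1_def y1_def U1_def V1_def by (simp add: inner_vec_def sum_3)
  have dot2: "a1 \<bullet> u2 = x1*U2+y1*V2" using plane(1) frame(2)
    unfolding x1_def y1_def U2_def V2_def by (simp add: inner_vec_def sum_3)
  have crk: "(cross3 a1 u) \<bullet> kvec = a1$1 * u$2 - u$1 * a1$2" for u
    by (simp add: kvec_def inner_vec_def sum_3 cross_components)
  have c1: "cos \<psi>1 * \<rho> = x1*U1+y1*V1" using ang1 frame(3) rhopos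
    unfolding oriented_angle_def dot1 \<rho>_def by simp
  have "sin \<psi>1 = (x1*V1-y1*U1)/\<rho>" using ang1 frame(3) crk[of u1]
    unfolding oriented_angle_def \<rho>_def x1_def y1_def U1_def V1_def by simp
  hence s1: "sin \<psi>1 * \<rho> = x1*V1-y1*U1" using rhopos by simp
  have c2: "cos \<psi>2 * \<rho> = x1*U2+y1*V2" using ang2 frame(4) rhopos
    unfolding oriented_angle_def dot2 \<rho>_def by simp
  have "sin \<psi>2 = (x1*V2-y1*U2)/\<rho>" using ang2 frame(4) crk[of u2]
    unfolding oriented_angle_def \<rho>_def x1_def y1_def U2_def V2_def by simp
  hence s2: "sin \<psi>2 * \<rho> = x1*V2-y1*U2" using rhopos by simp
  define c where "c = cos \<psi>1"
  define s where "s = sin \<psi>1"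
  have cos2: "cos \<psi>2 = -e* s"
  proof -
    have "cos \<psi>2 * \<rho> = (-e* s)*\<rho>" unfolding c2 s_def mult.assoc s1 U2e V2e by (simp add: algebra_simps)
    thus ?thesis using mult_right_cancel[of \<rho> "cos \<psi>2" "-e* s"] rhopos by auto
  qed
  have sin2: "sin \<psi>2 = e* c"
  proof -
    have "sin \<psi>2 * \<rho> = (e* c)*\<rho>" unfolding s2 c_def mult.assoc c1 U2e V2e by (simp add: algebra_simps)
    thus ?thesis using mult_right_cancel[of \<rho> "sin \<psi>2" "e* c"] rhopos by auto
  qed
  define R where "R = ga*\<rho>"
  have R2: "R^2 = W" unfolding R_def W_g power_mult_distrib ga2 rho2 ..
  have cR: "c*R = P2*U1+Q2*V1" unfolding R_def c_def P2_def Q2_def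
    by (metis c1 mult.left_commute distrib_left mult.assoc)
  have sR: "s*R = P2*V1-Q2*U1" unfolding R_def s_def P2_def Q2_def
    by (metis s1 mult.left_commute right_diff_distrib mult.assoc)
  have key1: "t1*(c^2-s^2)*W = R1^2-R2^2+W^2"
  proof -
    have "t1*(c^2-s^2)*W = t1*((c*R)^2-(s*R)^2)" unfolding R2[symmetric] by (simp add: power2_eq_square algebra_simps)
    also have "\<dots> = Qr*(P2^2-Q2^2) + Qi*2*P2*Q2" unfolding cR sR QrE QiE by (simp add: power2_eq_square algebra_simps)
    also have "\<dots> = R1^2-R2^2+W^2" unfolding Qr_P Qi_P R1_def R2_def W_def by (simp add: power2_eq_square algebra_simps)
    finally show ?thesis .
  qed
  have key2: "t1*(c* s)*W = R1*R2"
  proof -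
    have "t1*(c* s)*W = t1*((c*R)*(s*R))" unfolding R2[symmetric] by (simp add: power2_eq_square algebra_simps)
    also have "\<dots> = (t1*U1*V1)*(P2^2-Q2^2) - Qr*P2*Q2" unfolding cR sR QrE by (simp add: power2_eq_square algebra_simps)
    also have "t1*U1*V1 = P1*Q1+P2*Q2" using QiE Qi_P by simp
    also have "(P1*Q1+P2*Q2)*(P2^2-Q2^2) - Qr*P2*Q2 = R1*R2" unfolding Qr_P R1_def R2_def by (simp add: power2_eq_square algebra_simps)
    finally show ?thesis .
  qed
  define N where "N = t1/W"
  have Npos: "N > 0" unfolding N_def using t1pos Wpos by simp
  have f1: "1+p^2-q^2 = N*(c^2-s^2)"
  proof -
    have "N*(c^2-s^2) = (t1*(c^2-s^2)*W)/W^2" unfolding N_def using Wpos by (simp add: field_simps power2_eq_square)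
    also have "\<dots> = 1+p^2-q^2" unfolding key1 p_def q_def using Wpos by (simp add: field_simps power2_eq_square)
    finally show ?thesis by simp
  qed
  have f2: "p* q = N* c* s"
  proof -
    have "N* c* s = (t1*(c* s)*W)/W^2" unfolding N_def using Wpos by (simp add: field_simps power2_eq_square)
    also have "\<dots> = p* q" unfolding key2 p_def q_def using Wpos by (simp add: field_simps power2_eq_square)
    finally show ?thesis by simp
  qed
  have cs: "c^2+s^2 = 1" unfolding c_def s_def by simp
  have sfnn: "sin \<phi> \<ge> 0" using phi by (simp add: sin_ge_zero)
  have sfc: "(sin \<phi>)^2 + (cos \<phi>)^2 = 1" by simp
  have fin: "sin \<theta> / (cos \<theta> + 1) = - ((1 + sin \<phi>) / cos \<phi>) * (s / c)"
    by (rule final_lemma[OF Npos qpos D_def sfnn sfc e1 e2 e3 cs f1 f2])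
  have th: "tan (\<theta>/2) = sin \<theta> / (cos \<theta> + 1)" using tan_half[of "\<theta>/2"] by simp
  have tn: "tan \<psi>1 = s/c" unfolding s_def c_def tan_def ..
  have ct: "cot \<psi>2 = -(s/c)" unfolding cot_def cos2 sin2 using enz by simp
  show ?thesis unfolding th tn ct fin by simp
qed

end
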